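(* Let $V$ be a proper (i.e. non-unitary) isometry on an infinite-dimensional separable Hilbert space and let $k\in\mathbb{N}$. Then $\overline{\Lambda_k(V)}=\overline{\mathbb{D}}$.
   Context: $\mathbb{D}=\{z\in\mathbb{C}:|z|<1\}$. For $T\in\mathcal{B}(\mathcal{L})$ and $k\in\mathbb{N}$, $\Lambda_k(T)=\{\lambda\in\mathbb{C}: PTP=\lambda P\text{ for some orthogonal projection } P \text{ of rank } k\}$. *)

theory Defs
  imports "HOL-Analysis.Analysis"
begin

text \<open>Every infinite-dimensional separable complex Hilbert space is unitarily equivalent
to l2(N), and the sets Lambda_k are invariant under unitary equivalence; we therefore
work concretely in l2 = square-summable sequences nat => complex.
Operators are functions (nat => complex) => (nat => complex); only their values on l2 matter.\<close>

definition l2 :: "(nat \<Rightarrow> complex) set" where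
  "l2 = {x. summable (\<lambda>n. (cmod (x n))^2)}"

definition l2_inner :: "(nat \<Rightarrow> complex) \<Rightarrow> (nat \<Rightarrow> complex) \<Rightarrow> complex" where
  "l2_inner x y = (\<Sum>n. x n * cnj (y n))"

definition l2_norm :: "(nat \<Rightarrow> complex) \<Rightarrow> real" where
  "l2_norm x = sqrt (\<Sum>n. (cmod (x n))^2)"

definition bounded_op :: "((nat \<Rightarrow> complex) \<Rightarrow> (nat \<Rightarrow> complex)) \<Rightarrow> bool" where
  "bounded_op T \<longleftrightarrow>
     (\<forall>x\<in>l2. T x \<in> l2) \<and>
     (\<forall>a x y. x \<in> l2 \<longrightarrow> y \<in> l2 \<longrightarrow> T (\<lambda>n. a * x n + y n) = (\<lambda>n. a * T x n + T y n)) \<and>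
     (\<exists>C. \<forall>x\<in>l2. l2_norm (T x) \<le> C * l2_norm x)"

definition isometry_op :: "((nat \<Rightarrow> complex) \<Rightarrow> (nat \<Rightarrow> complex)) \<Rightarrow> bool" where
  "isometry_op V \<longleftrightarrow> bounded_op V \<and> (\<forall>x\<in>l2. l2_norm (V x) = l2_norm x)"

definition unitary_op :: "((nat \<Rightarrow> complex) \<Rightarrow> (nat \<Rightarrow> complex)) \<Rightarrow> bool" where
  "unitary_op U \<longleftrightarrow> isometry_op U \<and> U ` l2 = l2"

definition range_dim :: "((nat \<Rightarrow> complex) \<Rightarrow> (nat \<Rightarrow> complex)) \<Rightarrow> nat \<Rightarrow> bool" where
  "range_dim P k \<longleftrightarrow>
     (\<exists>e :: nat \<Rightarrow> nat \<Rightarrow> complex.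
        (\<forall>i<k. e i \<in> l2) \<and>
        (\<forall>c. (\<lambda>n. \<Sum>i<k. c i * e i n) = (\<lambda>n. 0) \<longrightarrow> (\<forall>i<k. c i = 0)) \<and>
        P ` l2 = {(\<lambda>n. \<Sum>i<k. c i * e i n) | c. True})"

definition orth_proj_rank :: "nat \<Rightarrow> ((nat \<Rightarrow> complex) \<Rightarrow> (nat \<Rightarrow> complex)) \<Rightarrow> bool" where
  "orth_proj_rank k P \<longleftrightarrow>
     bounded_op P \<and>
     (\<forall>x\<in>l2. P (P x) = P x) \<and>
     (\<forall>x\<in>l2. \<forall>y\<in>l2. l2_inner (P x) y = l2_inner x (P y)) \<and>
     range_dim P k"

definition Lambda :: "nat \<Rightarrow> ((nat \<Rightarrow> complex) \<Rightarrow> (nat \<Rightarrow> complex)) \<Rightarrow> complex set" where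
  "Lambda k T = {\<mu>. \<exists>P. orth_proj_rank k P \<and> (\<forall>x\<in>l2. P (T (P x)) = (\<lambda>n. \<mu> * P x n))}"

end

theory Submission
  imports Defs
begin


definition lc :: "(nat \<Rightarrow> complex) \<Rightarrow> (nat \<Rightarrow> nat \<Rightarrow> complex) \<Rightarrow> nat \<Rightarrow> (nat \<Rightarrow> complex)" where
  "lc a x N = (\<lambda>t. \<Sum>i<N. a i * x i t)"

lemma l2_iff: "x \<in> l2 \<longleftrightarrow> summable (\<lambda>n. (cmod (x n))^2)"
  by (simp add: l2_def)

lemma l2_comb:
  assumes "x \<in> l2" "y \<in> l2"
  shows "(\<lambda>n. a * x n + y n) \<in> l2"
proof -
  have s: "summable (\<lambda>n. 2 * (cmod a)^2 * (cmod (x n))^2 + 2 * (cmod (y n))^2)"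
    using assms by (intro summable_add summable_mult) (auto simp: l2_iff)
  have b: "norm ((cmod (a * x n + y n))^2) \<le> 2 * (cmod a)^2 * (cmod (x n))^2 + 2 * (cmod (y n))^2" for n
  proof -
    have "cmod (a * x n + y n) \<le> cmod a * cmod (x n) + cmod (y n)"
      using norm_triangle_ineq[of "a * x n" "y n"] by (simp add: norm_mult)
    hence "(cmod (a * x n + y n))^2 \<le> (cmod a * cmod (x n) + cmod (y n))^2"
      by (intro power_mono) auto
    also have "\<dots> \<le> 2 * (cmod a)^2 * (cmod (x n))^2 + 2 * (cmod (y n))^2"
      using sum_squares_bound[of "cmod a * cmod (x n)" "cmod (y n)"]
      by (simp add: power2_eq_square algebra_simps)
    finally show ?thesis by simp
  qed
  show ?thesis unfolding l2_iff
    by (rule summable_comparison_test'[OF s]) (use b in auto)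
qed

lemma l2_zero: "(\<lambda>n. 0) \<in> l2"
  by (simp add: l2_iff)

lemma l2_scale: "x \<in> l2 \<Longrightarrow> (\<lambda>n. a * x n) \<in> l2"
  using l2_comb[OF _ l2_zero, of x a] by simp

lemma l2_add: "x \<in> l2 \<Longrightarrow> y \<in> l2 \<Longrightarrow> (\<lambda>n. x n + y n) \<in> l2"
  using l2_comb[of x y 1] by simp

lemma l2_diff: "x \<in> l2 \<Longrightarrow> y \<in> l2 \<Longrightarrow> (\<lambda>n. x n - y n) \<in> l2"
  using l2_comb[of y x "-1"] by simp

lemma l2_lc: "(\<And>i. i < N \<Longrightarrow> x i \<in> l2) \<Longrightarrow> lc a x N \<in> l2"
proof (induction N)
  case 0 thus ?case by (simp add: lc_def l2_zero)
next
  case (Suc N)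
  have "lc a x (Suc N) = (\<lambda>t. a N * x N t + lc a x N t)"
    by (simp add: lc_def add.commute)
  thus ?case using Suc l2_comb by auto
qed

lemma l2_delta: "(\<lambda>n. if n = j then c else 0) \<in> l2"
  unfolding l2_iff by (rule summable_finite[of "{j}"]) auto

lemma inner_summable_norm:
  assumes "x \<in> l2" "y \<in> l2"
  shows "summable (\<lambda>n. norm (x n * cnj (y n)))"
proof -
  have s: "summable (\<lambda>n. ((cmod (x n))^2 + (cmod (y n))^2) / 2)"
    using assms by (intro summable_divide summable_add) (auto simp: l2_iff)
  show ?thesis
  proof (rule summable_comparison_test'[OF s])
    fix n
    show "norm (norm (x n * cnj (y n))) \<le> ((cmod (x n))^2 + (cmod (y n))^2) / 2"
      using sum_squares_bound[of "cmod (x n)" "cmod (y n)"]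
      by (simp add: norm_mult power2_eq_square)
  qed
qed

lemma inner_summable: "x \<in> l2 \<Longrightarrow> y \<in> l2 \<Longrightarrow> summable (\<lambda>n. x n * cnj (y n))"
  by (rule summable_norm_cancel[OF inner_summable_norm])

lemma inner_comb_left:
  assumes "x \<in> l2" "y \<in> l2" "z \<in> l2"
  shows "l2_inner (\<lambda>n. a * x n + y n) z = a * l2_inner x z + l2_inner y z"
proof -
  have "(\<lambda>n. (a * x n + y n) * cnj (z n)) = (\<lambda>n. a * (x n * cnj (z n)) + y n * cnj (z n))"
    by (simp add: algebra_simps)
  moreover have "(\<Sum>n. a * (x n * cnj (z n)) + y n * cnj (z n)) = a * (\<Sum>n. x n * cnj (z n)) + (\<Sum>n. y n * cnj (z n))"
  proof -
    have s1: "summable (\<lambda>n. x n * cnj (z n))" by (rule inner_summable[OF assms(1,3)])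
    have s2: "summable (\<lambda>n. y n * cnj (z n))" by (rule inner_summable[OF assms(2,3)])
    have "(\<Sum>n. a * (x n * cnj (z n)) + y n * cnj (z n)) = (\<Sum>n. a * (x n * cnj (z n))) + (\<Sum>n. y n * cnj (z n))"
      by (rule suminf_add[symmetric]) (use s1 s2 summable_mult in auto)
    also have "(\<Sum>n. a * (x n * cnj (z n))) = a * (\<Sum>n. x n * cnj (z n))"
      by (rule suminf_mult[OF s1])
    finally show ?thesis .
  qed
  ultimately show ?thesis by (simp add: l2_inner_def)
qed

lemma inner_commute:
  assumes "x \<in> l2" "y \<in> l2"
  shows "l2_inner y x = cnj (l2_inner x y)"
proof -
  have "(\<lambda>n. x n * cnj (y n)) sums l2_inner x y"
    using inner_summable[OF assms] by (simp add: l2_inner_def summable_sums)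
  hence "(\<lambda>n. cnj (x n * cnj (y n))) sums cnj (l2_inner x y)"
    by (rule iffD2[OF sums_cnj])
  hence "(\<lambda>n. y n * cnj (x n)) sums cnj (l2_inner x y)"
    by (simp add: mult.commute)
  thus ?thesis by (simp add: l2_inner_def sums_iff)
qed

lemma inner_comb_right:
  assumes "x \<in> l2" "y \<in> l2" "z \<in> l2"
  shows "l2_inner z (\<lambda>n. a * x n + y n) = cnj a * l2_inner z x + l2_inner z y"
proof -
  have "l2_inner z (\<lambda>n. a * x n + y n) = cnj (l2_inner (\<lambda>n. a * x n + y n) z)"
    by (rule inner_commute) (use assms l2_comb in auto)
  also have "\<dots> = cnj a * cnj (l2_inner x z) + cnj (l2_inner y z)"
    by (simp add: inner_comb_left[OF assms])
  also have "\<dots> = cnj a * l2_inner z x + l2_inner z y"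
    using inner_commute[of z x] inner_commute[of z y] assms by simp
  finally show ?thesis .
qed

lemma norm_sq_sum: "x \<in> l2 \<Longrightarrow> (l2_norm x)^2 = (\<Sum>n. (cmod (x n))^2)"
proof -
  assume "x \<in> l2"
  have "0 \<le> (\<Sum>n. (cmod (x n))^2)"
    by (rule suminf_nonneg) (use \<open>x \<in> l2\<close> in \<open>auto simp: l2_iff\<close>)
  thus ?thesis unfolding l2_norm_def by simp
qed

lemma inner_self: 
  assumes "x \<in> l2" shows "l2_inner x x = of_real ((l2_norm x)^2)"
proof -
  have "l2_inner x x = (\<Sum>n. of_real ((cmod (x n))^2))"
    unfolding l2_inner_def by (intro suminf_cong) (rule complex_norm_square[symmetric])
  also have "\<dots> = of_real (\<Sum>n. (cmod (x n))^2)"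
    using assms by (simp add: suminf_of_real l2_iff)
  finally show ?thesis using norm_sq_sum[OF assms] by simp
qed

lemma l2_norm_nonneg: "x \<in> l2 \<Longrightarrow> l2_norm x \<ge> 0"
  unfolding l2_norm_def by (simp add: suminf_nonneg l2_iff)

lemma l2_norm_zero_iff:
  assumes "x \<in> l2" shows "l2_norm x = 0 \<longleftrightarrow> x = (\<lambda>n. 0)"
proof -
  have "l2_norm x = 0 \<longleftrightarrow> (l2_norm x)^2 = 0" by simp
  also have "\<dots> \<longleftrightarrow> (\<Sum>n. (cmod (x n))^2) = 0"
    by (simp only: norm_sq_sum[OF assms])
  also have "\<dots> \<longleftrightarrow> (\<forall>n. (cmod (x n))^2 = 0)"
    using assms by (intro suminf_eq_zero_iff) (auto simp: l2_iff)
  also have "\<dots> \<longleftrightarrow> x = (\<lambda>n. 0)" by (auto simp: fun_eq_iff)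
  finally show ?thesis .
qed



lemma sum_abs_prod_le:
  assumes "x \<in> l2" "y \<in> l2"
  shows "(\<Sum>n. norm (x n * cnj (y n))) \<le> l2_norm x * l2_norm y"
proof -
  define A where "A = (\<Sum>n. (cmod (x n))^2)"
  define B where "B = (\<Sum>n. (cmod (y n))^2)"
  have sx: "summable (\<lambda>n. (cmod (x n))^2)" and sy: "summable (\<lambda>n. (cmod (y n))^2)"
    using assms by (auto simp: l2_iff)
  have nx: "l2_norm x = sqrt A" and ny: "l2_norm y = sqrt B"
    by (simp_all add: l2_norm_def A_def B_def)
  have A0: "A \<ge> 0" "B \<ge> 0" unfolding A_def B_def using sx sy by (auto intro: suminf_nonneg)
  have sn: "summable (\<lambda>n. norm (x n * cnj (y n)))" by (rule inner_summable_norm[OF assms])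
  show ?thesis
  proof (cases "A = 0 \<or> B = 0")
    case True
    hence "(\<forall>n. (cmod (x n))^2 = 0) \<or> (\<forall>n. (cmod (y n))^2 = 0)"
      using suminf_eq_zero_iff[OF sx] suminf_eq_zero_iff[OF sy] unfolding A_def B_def by auto
    hence "(\<lambda>n. norm (x n * cnj (y n))) = (\<lambda>n. 0)" by (auto simp: norm_mult fun_eq_iff)
    hence "(\<Sum>n. norm (x n * cnj (y n))) = 0" by (simp only: suminf_zero)
    thus ?thesis using l2_norm_nonneg assms by simp
  next
    case False
    hence Ap: "A > 0" "B > 0" using A0 by auto
    define t where "t = sqrt B / sqrt A"
    have tp: "t > 0" using Ap by (simp add: t_def)
    have pt: "norm (x n * cnj (y n)) \<le> (t * (cmod (x n))^2 + (cmod (y n))^2 / t) / 2" for n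
    proof -
      have "0 \<le> (t * cmod (x n) - cmod (y n))^2" by simp
      hence "2 * t * (cmod (x n) * cmod (y n)) \<le> t^2 * (cmod (x n))^2 + (cmod (y n))^2"
        by (simp add: power2_eq_square algebra_simps)
      hence "2 * t * (cmod (x n) * cmod (y n)) / t \<le> (t^2 * (cmod (x n))^2 + (cmod (y n))^2) / t"
        using tp by (intro divide_right_mono) auto
      thus ?thesis using tp by (simp add: norm_mult power2_eq_square field_simps)
    qed
    have "(\<Sum>n. norm (x n * cnj (y n))) \<le> (\<Sum>n. (t * (cmod (x n))^2 + (cmod (y n))^2 / t) / 2)"
      by (rule suminf_le[OF pt sn]) (intro summable_divide summable_add summable_mult sx sy)
    also have "\<dots> = (t * A + B / t) / 2"
    proof -
      have "(\<Sum>n. (t * (cmod (x n))^2 + (cmod (y n))^2 / t) / 2) = (\<Sum>n. (t * (cmod (x n))^2 + (cmod (y n))^2 / t)) / 2"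
        by (rule suminf_divide) (intro summable_add summable_mult summable_divide sx sy)
      also have "(\<Sum>n. (t * (cmod (x n))^2 + (cmod (y n))^2 / t)) = (\<Sum>n. t * (cmod (x n))^2) + (\<Sum>n. (cmod (y n))^2 / t)"
        by (rule suminf_add[symmetric]) (intro summable_mult summable_divide sx sy)+
      also have "(\<Sum>n. t * (cmod (x n))^2) = t * A" unfolding A_def by (rule suminf_mult[OF sx])
      also have "(\<Sum>n. (cmod (y n))^2 / t) = B / t" unfolding B_def by (rule suminf_divide[OF sy])
      finally show ?thesis .
    qed
    also have "\<dots> = sqrt A * sqrt B"
    proof -
      have sA: "sqrt A * sqrt A = A" and sB: "sqrt B * sqrt B = B" using Ap by simp_all
      have q1: "sqrt A > 0" "sqrt B > 0" using Ap by simp_all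
      have "t * A = sqrt B / sqrt A * (sqrt A * sqrt A)" unfolding t_def sA ..
      also have "\<dots> = sqrt A * sqrt B" using q1 by (simp add: field_simps)
      finally have "t * A = sqrt A * sqrt B" .
      moreover have "B / t = sqrt A * sqrt B"
      proof -
        have "B / t = (sqrt B * sqrt B) / (sqrt B / sqrt A)" unfolding t_def sB ..
        also have "\<dots> = sqrt A * sqrt B" using q1 by (simp add: field_simps)
        finally show ?thesis .
      qed
      ultimately show ?thesis by simp
    qed
    finally show ?thesis using nx ny by simp
  qed
qed

lemma cauchy_schwarz:
  assumes "x \<in> l2" "y \<in> l2"
  shows "cmod (l2_inner x y) \<le> l2_norm x * l2_norm y"
proof -
  have "cmod (l2_inner x y) \<le> (\<Sum>n. norm (x n * cnj (y n)))"
    unfolding l2_inner_def by (rule summable_norm[OF inner_summable_norm[OF assms]])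
  also have "\<dots> \<le> l2_norm x * l2_norm y" by (rule sum_abs_prod_le[OF assms])
  finally show ?thesis .
qed

lemma inner_expand:
  assumes "x \<in> l2" "y \<in> l2"
  shows "l2_inner (\<lambda>n. a * x n + y n) (\<lambda>n. a * x n + y n) =
    a * cnj a * l2_inner x x + a * l2_inner x y + cnj a * l2_inner y x + l2_inner y y"
proof -
  have c: "(\<lambda>n. a * x n + y n) \<in> l2" using l2_comb assms by auto
  have "l2_inner (\<lambda>n. a * x n + y n) (\<lambda>n. a * x n + y n) =
     a * l2_inner x (\<lambda>n. a * x n + y n) + l2_inner y (\<lambda>n. a * x n + y n)"
    by (rule inner_comb_left[OF assms c])
  also have "l2_inner x (\<lambda>n. a * x n + y n) = cnj a * l2_inner x x + l2_inner x y"
    by (rule inner_comb_right[OF assms assms(1)])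
  also have "l2_inner y (\<lambda>n. a * x n + y n) = cnj a * l2_inner y x + l2_inner y y"
    by (rule inner_comb_right[OF assms assms(2)])
  finally show ?thesis by (simp add: algebra_simps)
qed

lemma norm_comb_sq:
  assumes "x \<in> l2" "y \<in> l2"
  shows "(l2_norm (\<lambda>n. a * x n + y n))^2 =
    (cmod a)^2 * (l2_norm x)^2 + 2 * Re (a * l2_inner x y) + (l2_norm y)^2"
proof -
  have c: "(\<lambda>n. a * x n + y n) \<in> l2" using l2_comb assms by auto
  have h: "complex_of_real ((l2_norm (\<lambda>n. a * x n + y n))^2) =
     a * cnj a * of_real ((l2_norm x)^2) + a * l2_inner x y + cnj a * cnj (l2_inner x y) + of_real ((l2_norm y)^2)"
    using inner_expand[OF assms, of a] inner_self[OF c] inner_self[OF assms(1)] inner_self[OF assms(2)]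
      inner_commute[OF assms] by simp
  have "Re (complex_of_real ((l2_norm (\<lambda>n. a * x n + y n))^2)) = Re (a * cnj a * of_real ((l2_norm x)^2) + a * l2_inner x y + cnj a * cnj (l2_inner x y) + of_real ((l2_norm y)^2))"
    using h by (rule arg_cong)
  hence "(l2_norm (\<lambda>n. a * x n + y n))^2 = Re (a * cnj a * of_real ((l2_norm x)^2) + a * l2_inner x y + cnj a * cnj (l2_inner x y) + of_real ((l2_norm y)^2))"
    by (simp only: Re_complex_of_real)
  also have "\<dots> = (cmod a)^2 * (l2_norm x)^2 + 2 * Re (a * l2_inner x y) + (l2_norm y)^2"
  proof -
    have "a * cnj a = of_real ((cmod a)^2)" by (rule complex_norm_square[symmetric])
    moreover have "cnj a * cnj (l2_inner x y) = cnj (a * l2_inner x y)" by simp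
    ultimately show ?thesis by (simp del: complex_cnj_mult)
  qed
  finally show ?thesis .
qed

lemma norm_comb_le:
  assumes "x \<in> l2" "y \<in> l2"
  shows "l2_norm (\<lambda>n. a * x n + y n) \<le> cmod a * l2_norm x + l2_norm y"
proof -
  have c: "(\<lambda>n. a * x n + y n) \<in> l2" using l2_comb assms by auto
  have "Re (a * l2_inner x y) \<le> cmod (a * l2_inner x y)" by (rule complex_Re_le_cmod)
  also have "\<dots> \<le> cmod a * (l2_norm x * l2_norm y)"
    unfolding norm_mult by (intro mult_left_mono cauchy_schwarz assms) auto
  finally have r: "Re (a * l2_inner x y) \<le> cmod a * (l2_norm x * l2_norm y)" .
  have e: "(cmod a * l2_norm x + l2_norm y)^2 = (cmod a)^2 * (l2_norm x)^2 + 2 * (cmod a * (l2_norm x * l2_norm y)) + (l2_norm y)^2"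
    by (simp add: power2_eq_square algebra_simps)
  have "(l2_norm (\<lambda>n. a * x n + y n))^2 \<le> (cmod a * l2_norm x + l2_norm y)^2"
    unfolding e norm_comb_sq[OF assms, of a] using r by linarith
  moreover have "0 \<le> cmod a * l2_norm x + l2_norm y"
    using l2_norm_nonneg[OF assms(1)] l2_norm_nonneg[OF assms(2)] by simp
  ultimately show ?thesis by (rule power2_le_imp_le)
qed



lemma bounded_opD:
  assumes "bounded_op T"
  shows "x \<in> l2 \<Longrightarrow> T x \<in> l2"
    and "x \<in> l2 \<Longrightarrow> y \<in> l2 \<Longrightarrow> T (\<lambda>n. a * x n + y n) = (\<lambda>n. a * T x n + T y n)"
  using assms unfolding bounded_op_def by blast+

lemma op_zero:
  assumes "bounded_op T" shows "T (\<lambda>n. 0) = (\<lambda>n. 0)"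
proof -
  have h: "T (\<lambda>n. (-1) * 0 + 0) = (\<lambda>n. (-1) * T (\<lambda>n. 0) n + T (\<lambda>n. 0) n)"
    by (rule bounded_opD(2)[OF assms l2_zero l2_zero])
  have e: "(\<lambda>n::nat. (-1::complex) * 0 + 0) = (\<lambda>n. 0)" by simp
  have "T (\<lambda>n. 0) = (\<lambda>n. (-1) * T (\<lambda>n. 0) n + T (\<lambda>n. 0) n)"
    using h unfolding e .
  thus ?thesis by (simp add: fun_eq_iff)
qed

lemma lc_Suc: "lc a x (Suc N) = (\<lambda>t. a N * x N t + lc a x N t)"
  by (simp add: lc_def add.commute)

lemma lc_0: "lc a x 0 = (\<lambda>t. 0)"
  unfolding lc_def by (rule ext) (simp only: lessThan_0 sum.empty)

lemma op_lc:
  assumes "bounded_op T" "\<And>i. i < N \<Longrightarrow> x i \<in> l2"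
  shows "T (lc a x N) = lc a (\<lambda>i. T (x i)) N"
  using assms(2)
proof (induction N)
  case 0 thus ?case by (simp add: lc_0 op_zero[OF assms(1)])
next
  case (Suc N)
  have l: "lc a x N \<in> l2" by (rule l2_lc) (use Suc.prems in auto)
  have "T (lc a x (Suc N)) = (\<lambda>t. a N * T (x N) t + T (lc a x N) t)"
    unfolding lc_Suc by (rule bounded_opD(2)[OF assms(1)]) (use Suc.prems l in auto)
  also have "T (lc a x N) = lc a (\<lambda>i. T (x i)) N" using Suc by auto
  finally show ?case by (simp add: lc_Suc)
qed

lemma inner_lc_left:
  assumes "\<And>i. i < N \<Longrightarrow> x i \<in> l2" "z \<in> l2"
  shows "l2_inner (lc a x N) z = (\<Sum>i<N. a i * l2_inner (x i) z)"
  using assms(1)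
proof (induction N)
  case 0 thus ?case by (simp add: lc_0 l2_inner_def)
next
  case (Suc N)
  have l: "lc a x N \<in> l2" by (rule l2_lc) (use Suc.prems in auto)
  have "l2_inner (lc a x (Suc N)) z = a N * l2_inner (x N) z + l2_inner (lc a x N) z"
    unfolding lc_Suc by (rule inner_comb_left) (use Suc.prems l assms(2) in auto)
  thus ?case using Suc by (simp add: add.commute)
qed

lemma inner_lc_right:
  assumes "\<And>i. i < N \<Longrightarrow> x i \<in> l2" "z \<in> l2"
  shows "l2_inner z (lc a x N) = (\<Sum>i<N. cnj (a i) * l2_inner z (x i))"
proof -
  have l: "lc a x N \<in> l2" by (rule l2_lc) (use assms in auto)
  have "l2_inner z (lc a x N) = cnj (l2_inner (lc a x N) z)" by (rule inner_commute[OF l assms(2)])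
  also have "\<dots> = (\<Sum>i<N. cnj (a i) * cnj (l2_inner (x i) z))"
    by (simp add: inner_lc_left[OF assms])
  also have "\<dots> = (\<Sum>i<N. cnj (a i) * l2_inner z (x i))"
  proof (rule sum.cong[OF refl])
    fix i assume "i \<in> {..<N}"
    hence "x i \<in> l2" using assms(1) by simp
    from inner_commute[OF this assms(2)]
    show "cnj (a i) * cnj (l2_inner (x i) z) = cnj (a i) * l2_inner z (x i)" by simp
  qed
  finally show ?thesis .
qed

lemma norm_lc_le:
  assumes "\<And>i. i < N \<Longrightarrow> x i \<in> l2"
  shows "l2_norm (lc a x N) \<le> (\<Sum>i<N. cmod (a i) * l2_norm (x i))"
  using assms
proof (induction N)
  case 0 thus ?case by (simp add: lc_0 l2_norm_def)
next
  case (Suc N)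
  have l: "lc a x N \<in> l2" by (rule l2_lc) (use Suc.prems in auto)
  have "l2_norm (lc a x (Suc N)) \<le> cmod (a N) * l2_norm (x N) + l2_norm (lc a x N)"
    unfolding lc_Suc by (rule norm_comb_le) (use Suc.prems l in auto)
  thus ?case using Suc by (simp add: add.commute)
qed

lemma isometry_inner:
  assumes "isometry_op V" "x \<in> l2" "y \<in> l2"
  shows "l2_inner (V x) (V y) = l2_inner x y"
proof -
  have b: "bounded_op V" and nV: "\<And>z. z \<in> l2 \<Longrightarrow> l2_norm (V z) = l2_norm z"
    using assms(1) unfolding isometry_op_def by auto
  have Vx: "V x \<in> l2" and Vy: "V y \<in> l2" using bounded_opD(1)[OF b] assms by auto
  have re: "Re (a * l2_inner (V x) (V y)) = Re (a * l2_inner x y)" for a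
  proof -
    have c: "(\<lambda>n. a * x n + y n) \<in> l2" using l2_comb assms by auto
    have "(l2_norm (\<lambda>n. a * V x n + V y n))^2 = (l2_norm (\<lambda>n. a * x n + y n))^2"
      using nV[OF c] bounded_opD(2)[OF b assms(2,3), of a] by simp
    thus ?thesis unfolding norm_comb_sq[OF Vx Vy] norm_comb_sq[OF assms(2,3)]
      using nV[OF assms(2)] nV[OF assms(3)] by simp
  qed
  show ?thesis using re[of 1] re[of \<i>] by (simp add: complex_eq_iff)
qed

lemma isometry_id: "isometry_op (\<lambda>x. x)"
  unfolding isometry_op_def bounded_op_def by (auto intro: exI[of _ 1])

lemma isometry_comp:
  assumes "isometry_op S" "isometry_op T"
  shows "isometry_op (\<lambda>x. S (T x))"
proof -
  have bS: "bounded_op S" and nS: "\<And>z. z \<in> l2 \<Longrightarrow> l2_norm (S z) = l2_norm z"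
    using assms(1) unfolding isometry_op_def by auto
  have bT: "bounded_op T" and nT: "\<And>z. z \<in> l2 \<Longrightarrow> l2_norm (T z) = l2_norm z"
    using assms(2) unfolding isometry_op_def by auto
  have lin: "S (T (\<lambda>n. a * x n + y n)) = (\<lambda>n. a * S (T x) n + S (T y) n)"
    if "x \<in> l2" "y \<in> l2" for a x y
    using bounded_opD[OF bT] bounded_opD[OF bS] that by simp
  have "bounded_op (\<lambda>x. S (T x))"
    unfolding bounded_op_def
    using bounded_opD(1)[OF bT] bounded_opD(1)[OF bS] lin nS nT
    by (auto intro!: exI[of _ 1])
  thus ?thesis unfolding isometry_op_def using bounded_opD(1)[OF bT] nS nT by auto
qed

lemma isometry_funpow:
  assumes "isometry_op V" shows "isometry_op (V ^^ m)"
proof (induction m)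
  case 0 thus ?case using isometry_id by (simp add: id_def)
next
  case (Suc m)
  have "V ^^ Suc m = (\<lambda>x. V ((V ^^ m) x))" by (simp add: fun_eq_iff)
  thus ?case using isometry_comp[OF assms Suc] by simp
qed



definition dlt :: "nat \<Rightarrow> nat \<Rightarrow> complex" where
  "dlt j = (\<lambda>n. if n = j then 1 else 0)"

lemma dlt_l2: "dlt j \<in> l2"
  unfolding dlt_def by (rule l2_delta)

lemma inner_dlt:
  assumes "u \<in> l2" shows "l2_inner u (dlt j) = u j"
proof -
  have "(\<lambda>n. u n * cnj (dlt j n)) = (\<lambda>n. if n = j then u n else 0)"
    by (auto simp: dlt_def fun_eq_iff)
  moreover have "(\<lambda>n. if n = j then u n else 0) sums u j" by (rule sums_single)
  ultimately show ?thesis unfolding l2_inner_def by (simp add: sums_iff)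
qed

lemma kron_sum:
  fixes c :: "nat \<Rightarrow> complex"
  shows "(\<Sum>j<N. c j * (if j = i then 1 else 0)) = (if i < N then c i else 0)"
proof -
  have "(\<Sum>j<N. c j * (if j = i then 1 else 0)) = (\<Sum>j<N. if j = i then c j else 0)"
    by (rule sum.cong) auto
  also have "\<dots> = (if i < N then c i else 0)" by (subst sum.delta) auto
  finally show ?thesis .
qed

lemma lc_dlt: "lc c dlt N = (\<lambda>n. if n < N then c n else 0)"
proof (rule ext)
  fix n
  have "lc c dlt N n = (\<Sum>j<N. c j * (if n = j then 1 else 0))"
    by (simp add: lc_def dlt_def)
  also have "\<dots> = (\<Sum>j<N. c j * (if j = n then 1 else 0))"
    by (rule sum.cong) auto
  also have "\<dots> = (if n < N then c n else 0)" by (rule kron_sum)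
  finally show "lc c dlt N n = (if n < N then c n else 0)" .
qed

lemma wandering:
  assumes iso: "isometry_op V" and nu: "\<not> unitary_op V"
  shows "\<exists>e0\<in>l2. e0 \<noteq> (\<lambda>n. 0) \<and> (\<forall>x\<in>l2. l2_inner (V x) e0 = 0)"
proof -
  have b: "bounded_op V" and nV: "\<And>z. z \<in> l2 \<Longrightarrow> l2_norm (V z) = l2_norm z"
    using iso unfolding isometry_op_def by auto
  have Vl2: "\<And>x. x \<in> l2 \<Longrightarrow> V x \<in> l2" using bounded_opD(1)[OF b] by auto
  have "V ` l2 \<noteq> l2" using nu iso unfolding unitary_op_def by auto
  moreover have "V ` l2 \<subseteq> l2" using Vl2 by auto
  ultimately obtain y where y: "y \<in> l2" "y \<notin> V ` l2" by auto
  define f where "f = (\<lambda>j. V (dlt j))"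
  have fl2: "\<And>j. f j \<in> l2" unfolding f_def using Vl2 dlt_l2 by auto
  have ff: "l2_inner (f i) (f j) = (if i = j then 1 else 0)" for i j
    unfolding f_def isometry_inner[OF iso dlt_l2 dlt_l2] inner_dlt[OF dlt_l2]
    by (simp add: dlt_def)
  define w where "w = (\<lambda>j. l2_inner y (f j))"
  have bessel: "(\<Sum>j<N. (cmod (w j))^2) \<le> (l2_norm y)^2" for N
  proof -
    define S where "S = (\<Sum>j<N. (cmod (w j))^2)"
    define z where "z = lc w f N"
    have zl2: "z \<in> l2" unfolding z_def by (rule l2_lc) (use fl2 in auto)
    have fz: "l2_inner (f i) z = cnj (w i)" if "i < N" for i
    proof -
      have "l2_inner (f i) z = (\<Sum>j<N. cnj (w j) * l2_inner (f i) (f j))"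
        unfolding z_def by (rule inner_lc_right) (use fl2 in auto)
      also have "\<dots> = (\<Sum>j<N. cnj (w j) * (if j = i then 1 else 0))"
        by (rule sum.cong) (auto simp: ff)
      also have "\<dots> = (if i < N then cnj (w i) else 0)" by (rule kron_sum)
      also have "\<dots> = cnj (w i)" using that by simp
      finally show ?thesis .
    qed
    have sq: "w j * cnj (w j) = complex_of_real ((cmod (w j))^2)" for j
      by (rule complex_norm_square[symmetric])
    have "l2_inner z z = (\<Sum>i<N. w i * l2_inner (f i) z)"
      unfolding z_def by (rule inner_lc_left) (use fl2 zl2[unfolded z_def] in auto)
    also have "\<dots> = (\<Sum>i<N. w i * cnj (w i))" by (rule sum.cong) (auto simp: fz)
    also have "\<dots> = of_real S" unfolding S_def sq by simp
    finally have zz: "l2_inner z z = of_real S" .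
    have "l2_inner y z = (\<Sum>i<N. cnj (w i) * l2_inner y (f i))"
      unfolding z_def by (rule inner_lc_right) (use fl2 y in auto)
    also have "\<dots> = (\<Sum>i<N. w i * cnj (w i))" by (rule sum.cong) (auto simp: w_def)
    also have "\<dots> = of_real S" unfolding S_def sq by simp
    finally have yz: "l2_inner y z = of_real S" .
    have S0: "S \<ge> 0" unfolding S_def by (rule sum_nonneg) auto
    have "complex_of_real ((l2_norm z)^2) = complex_of_real S"
      by (subst inner_self[OF zl2, symmetric]) (rule zz)
    hence nz: "(l2_norm z)^2 = S" by (simp only: of_real_eq_iff)
    have nzs: "l2_norm z = sqrt S" using nz l2_norm_nonneg[OF zl2] by (metis real_sqrt_abs abs_of_nonneg)
    have "S \<le> l2_norm y * sqrt S"
      using cauchy_schwarz[OF y(1) zl2] yz S0 nzs by simp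
    hence "sqrt S * sqrt S \<le> l2_norm y * sqrt S" using S0 by simp
    hence "sqrt S \<le> l2_norm y \<or> sqrt S = 0"
      using S0 by (metis mult_right_le_imp_le real_sqrt_ge_zero order.not_eq_order_implies_strict)
    hence "sqrt S \<le> l2_norm y" using l2_norm_nonneg[OF y(1)] by auto
    hence "(sqrt S)^2 \<le> (l2_norm y)^2" using S0 by (intro power_mono) auto
    thus ?thesis using S0 unfolding S_def by simp
  qed
  have wl2: "w \<in> l2" unfolding l2_iff
    by (rule summableI_nonneg_bounded[of _ "(l2_norm y)^2"]) (use bessel in auto)
  define z where "z = V w"
  have zl2: "z \<in> l2" unfolding z_def by (rule Vl2[OF wl2])
  have zf: "l2_inner z (f j) = w j" for j
    unfolding z_def f_def isometry_inner[OF iso wl2 dlt_l2] inner_dlt[OF wl2] ..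
  define e0 where "e0 = (\<lambda>n. (-1) * z n + y n)"
  have e0l2: "e0 \<in> l2" unfolding e0_def by (rule l2_comb[OF zl2 y(1)])
  have e0f: "l2_inner e0 (f j) = 0" for j
    unfolding e0_def inner_comb_left[OF zl2 y(1) fl2] zf by (simp add: w_def)
  have fe0: "l2_inner (f j) e0 = 0" for j
    using inner_commute[OF e0l2 fl2[of j]] e0f[of j] by simp
  have e0nz: "e0 \<noteq> (\<lambda>n. 0)"
  proof
    assume "e0 = (\<lambda>n. 0)"
    hence "\<And>n. (-1) * z n + y n = 0" unfolding e0_def by meson
    hence "y = z" by (auto simp: fun_eq_iff add_eq_0_iff)
    hence "y \<in> V ` l2" unfolding z_def using wl2 by auto
    thus False using y(2) by simp
  qed
  have orth: "l2_inner (V x) e0 = 0" if xl2: "x \<in> l2" for x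
  proof -
    define t where "t = (\<lambda>N. lc x dlt N)"
    have tl2: "t N \<in> l2" for N unfolding t_def by (rule l2_lc) (use dlt_l2 in auto)
    have Vt: "V (t N) = lc x f N" for N
      unfolding t_def f_def by (rule op_lc[OF b]) (use dlt_l2 in auto)
    have it: "l2_inner (V (t N)) e0 = 0" for N
      unfolding Vt by (subst inner_lc_left) (use fl2 e0l2 fe0 in auto)
    define d where "d = (\<lambda>N. (\<lambda>n. (-1) * t N n + x n))"
    have dl2: "d N \<in> l2" for N unfolding d_def by (rule l2_comb[OF tl2 xl2])
    have id: "l2_inner (V (d N)) e0 = l2_inner (V x) e0" for N
    proof -
      have vd: "V (d N) = (\<lambda>n. (-1) * V (t N) n + V x n)"
        unfolding d_def by (rule bounded_opD(2)[OF b tl2 xl2])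
      have "l2_inner (V (d N)) e0 = (-1) * l2_inner (V (t N)) e0 + l2_inner (V x) e0"
        unfolding vd by (rule inner_comb_left[OF Vl2[OF tl2] Vl2[OF xl2] e0l2])
      thus ?thesis using it by simp
    qed
    have bnd: "cmod (l2_inner (V x) e0) \<le> l2_norm (d N) * l2_norm e0" for N
    proof -
      have "cmod (l2_inner (V (d N)) e0) \<le> l2_norm (V (d N)) * l2_norm e0"
        by (rule cauchy_schwarz[OF Vl2[OF dl2] e0l2])
      thus ?thesis unfolding id nV[OF dl2] .
    qed
    define X where "X = (\<Sum>n. (cmod (x n))^2)"
    have sx: "summable (\<lambda>n. (cmod (x n))^2)" using xl2 by (simp add: l2_iff)
    have dn: "(l2_norm (d N))^2 = X - (\<Sum>n<N. (cmod (x n))^2)" for N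
    proof -
      have dN: "d N = (\<lambda>n. if n < N then 0 else x n)"
        unfolding d_def t_def lc_dlt by (auto simp: fun_eq_iff)
      have s1: "(\<lambda>n. (cmod (x n))^2) sums X" unfolding X_def using sx by (simp add: summable_sums)
      have s2: "(\<lambda>n. if n \<in> {..<N} then (cmod (x n))^2 else 0) sums (\<Sum>n<N. (cmod (x n))^2)"
        by (rule sums_If_finite_set) simp
      have "(\<lambda>n. (cmod (x n))^2 - (if n \<in> {..<N} then (cmod (x n))^2 else 0)) sums (X - (\<Sum>n<N. (cmod (x n))^2))"
        by (rule sums_diff[OF s1 s2])
      moreover have "(\<lambda>n. (cmod (x n))^2 - (if n \<in> {..<N} then (cmod (x n))^2 else 0)) = (\<lambda>n. (cmod (d N n))^2)"
        unfolding dN by (auto simp: fun_eq_iff)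
      ultimately have "(\<lambda>n. (cmod (d N n))^2) sums (X - (\<Sum>n<N. (cmod (x n))^2))" by simp
      thus ?thesis using norm_sq_sum[OF dl2] by (simp add: sums_iff)
    qed
    have "(\<lambda>N. X - (\<Sum>n<N. (cmod (x n))^2)) \<longlonglongrightarrow> X - X"
      unfolding X_def by (intro tendsto_diff tendsto_const summable_LIMSEQ sx)
    hence "(\<lambda>N. (l2_norm (d N))^2) \<longlonglongrightarrow> 0" unfolding dn by simp
    hence "(\<lambda>N. sqrt ((l2_norm (d N))^2)) \<longlonglongrightarrow> sqrt 0" by (rule tendsto_real_sqrt)
    hence "(\<lambda>N. l2_norm (d N)) \<longlonglongrightarrow> 0" using l2_norm_nonneg[OF dl2] by simp
    hence "(\<lambda>N. l2_norm (d N) * l2_norm e0) \<longlonglongrightarrow> 0 * l2_norm e0"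
      by (intro tendsto_mult tendsto_const)
    hence lim: "(\<lambda>N. l2_norm (d N) * l2_norm e0) \<longlonglongrightarrow> 0" by simp
    have "cmod (l2_inner (V x) e0) \<le> 0"
      by (rule LIMSEQ_le_const[OF lim]) (use bnd in auto)
    thus ?thesis by simp
  qed
  show ?thesis using e0l2 e0nz orth by blast
qed



lemma kron_sum2:
  fixes c :: "nat \<Rightarrow> complex"
  shows "(\<Sum>j<N. c j * (if j = i then s else 0)) = (if i < N then c i * s else 0)"
proof -
  have "(\<Sum>j<N. c j * (if j = i then s else 0)) = (\<Sum>j<N. if j = i then c j * s else 0)"
    by (rule sum.cong) auto
  also have "\<dots> = (if i < N then c i * s else 0)" by (subst sum.delta) auto
  finally show ?thesis .
qed

lemma lc_cong: "(\<And>i. i < N \<Longrightarrow> a i = b i) \<Longrightarrow> lc a x N = lc b x N"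
  unfolding lc_def by (intro ext sum.cong) auto

lemma lc_comb: "lc (\<lambda>i. a * c1 i + c2 i) x N = (\<lambda>t. a * lc c1 x N t + lc c2 x N t)"
  unfolding lc_def by (auto simp: fun_eq_iff sum.distrib sum_distrib_left algebra_simps)

lemma lc_scale: "lc (\<lambda>i. c i * s) x N = (\<lambda>t. s * lc c x N t)"
  unfolding lc_def by (auto simp: fun_eq_iff sum_distrib_left algebra_simps)

lemma proj_lambda:
  fixes x :: "nat \<Rightarrow> nat \<Rightarrow> complex" and s :: real
  assumes b: "bounded_op V"
    and xl2: "\<And>i. x i \<in> l2"
    and s0: "s \<noteq> 0"
    and gx: "\<And>i j. l2_inner (x i) (x j) = (if i = j then of_real s else 0)"
    and gv: "\<And>i j. l2_inner (V (x i)) (x j) = (if i = j then \<rho> else 0)"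
  shows "\<rho> / of_real s \<in> Lambda k V"
proof -
  define \<sigma> where "\<sigma> = (of_real s :: complex)"
  have \<sigma>0: "\<sigma> \<noteq> 0" using s0 by (simp add: \<sigma>_def)
  have c\<sigma>: "cnj \<sigma> = \<sigma>" by (simp add: \<sigma>_def)
  have Vl2: "\<And>y. y \<in> l2 \<Longrightarrow> V y \<in> l2" using bounded_opD(1)[OF b] by auto
  define coef where "coef = (\<lambda>y i. l2_inner y (x i) / \<sigma>)"
  define P where "P = (\<lambda>y. lc (coef y) x k)"
  have Pl2: "P y \<in> l2" for y unfolding P_def by (rule l2_lc) (use xl2 in auto)
  have lcl2: "lc c x k \<in> l2" for c by (rule l2_lc) (use xl2 in auto)
  have coef_lc: "coef (lc c x k) j = c j" if "j < k" for c j
  proof -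
    have "l2_inner (lc c x k) (x j) = (\<Sum>i<k. c i * l2_inner (x i) (x j))"
      by (rule inner_lc_left) (use xl2 in auto)
    also have "\<dots> = (\<Sum>i<k. c i * (if i = j then \<sigma> else 0))"
      by (rule sum.cong) (auto simp: gx \<sigma>_def)
    also have "\<dots> = c j * \<sigma>" using kron_sum2[where c=c and N=k and i=j and s=\<sigma>] that by simp
    finally show ?thesis unfolding coef_def using \<sigma>0 by simp
  qed
  have PP: "P (P y) = P y" for y
    unfolding P_def by (rule lc_cong) (simp add: coef_lc)
  have Plin: "P (\<lambda>n. a * y1 n + y2 n) = (\<lambda>n. a * P y1 n + P y2 n)" if "y1 \<in> l2" "y2 \<in> l2" for a y1 y2
  proof -
    have "coef (\<lambda>n. a * y1 n + y2 n) = (\<lambda>i. a * coef y1 i + coef y2 i)"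
      unfolding coef_def using inner_comb_left[OF that xl2] by (auto simp: fun_eq_iff add_divide_distrib)
    thus ?thesis unfolding P_def by (simp only: lc_comb)
  qed
  define C where "C = (\<Sum>i<k. (l2_norm (x i))^2 / cmod \<sigma>)"
  have Pbd: "l2_norm (P y) \<le> C * l2_norm y" if "y \<in> l2" for y
  proof -
    have "l2_norm (P y) \<le> (\<Sum>i<k. cmod (coef y i) * l2_norm (x i))"
      unfolding P_def by (rule norm_lc_le) (use xl2 in auto)
    also have "\<dots> \<le> (\<Sum>i<k. (l2_norm y * l2_norm (x i) / cmod \<sigma>) * l2_norm (x i))"
    proof (rule sum_mono)
      fix i
      have "cmod (coef y i) = cmod (l2_inner y (x i)) / cmod \<sigma>" by (simp add: coef_def norm_divide)
      also have "\<dots> \<le> l2_norm y * l2_norm (x i) / cmod \<sigma>"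
        by (intro divide_right_mono cauchy_schwarz that xl2) simp
      finally show "cmod (coef y i) * l2_norm (x i) \<le> (l2_norm y * l2_norm (x i) / cmod \<sigma>) * l2_norm (x i)"
        by (intro mult_right_mono l2_norm_nonneg xl2)
    qed
    also have "\<dots> = (\<Sum>i<k. l2_norm y * ((l2_norm (x i))^2 / cmod \<sigma>))"
      by (rule sum.cong) (simp_all add: power2_eq_square)
    also have "\<dots> = C * l2_norm y" unfolding C_def sum_distrib_left[symmetric] by simp
    finally show ?thesis .
  qed
  have bP: "bounded_op P" unfolding bounded_op_def using Pl2 Plin Pbd by blast
  have Psa: "l2_inner (P y) z = l2_inner y (P z)" if "y \<in> l2" "z \<in> l2" for y z
  proof -
    have "l2_inner (P y) z = (\<Sum>i<k. coef y i * l2_inner (x i) z)"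
      unfolding P_def by (rule inner_lc_left) (use xl2 that in auto)
    also have "\<dots> = (\<Sum>i<k. cnj (coef z i) * l2_inner y (x i))"
    proof (rule sum.cong[OF refl])
      fix i
      have "l2_inner (x i) z = cnj (l2_inner z (x i))" by (rule inner_commute[OF that(2) xl2])
      thus "coef y i * l2_inner (x i) z = cnj (coef z i) * l2_inner y (x i)"
        unfolding coef_def by (simp add: c\<sigma>)
    qed
    also have "\<dots> = l2_inner y (P z)"
      unfolding P_def by (rule inner_lc_right[symmetric]) (use xl2 that in auto)
    finally show ?thesis .
  qed
  have zero_inner: "l2_inner (\<lambda>n. 0) z = 0" for z by (simp add: l2_inner_def)
  have rd: "range_dim P k"
    unfolding range_dim_def
  proof (intro exI[of _ x] conjI allI impI)
    show "\<And>i. i < k \<Longrightarrow> x i \<in> l2" using xl2 by auto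
  next
    fix c i assume h: "(\<lambda>n. \<Sum>i<k. c i * x i n) = (\<lambda>n. 0)" and i: "i < k"
    have "lc c x k = (\<lambda>n. 0)" using h by (simp add: lc_def)
    hence "coef (lc c x k) i = 0" by (simp add: coef_def zero_inner)
    thus "c i = 0" using coef_lc[OF i] by simp
  next
    show "P ` l2 = {\<lambda>n. \<Sum>i<k. c i * x i n |c. True}"
    proof
      show "P ` l2 \<subseteq> {\<lambda>n. \<Sum>i<k. c i * x i n |c. True}"
        unfolding P_def lc_def by auto
    next
      show "{\<lambda>n. \<Sum>i<k. c i * x i n |c. True} \<subseteq> P ` l2"
      proof
        fix v assume "v \<in> {\<lambda>n. \<Sum>i<k. c i * x i n |c. True}"
        then obtain c where v: "v = lc c x k" by (auto simp: lc_def)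
        have "P v = v" unfolding v P_def by (rule lc_cong) (simp add: coef_lc)
        thus "v \<in> P ` l2" using lcl2 v by (metis image_eqI)
      qed
    qed
  qed
  have opr: "orth_proj_rank k P"
    unfolding orth_proj_rank_def using bP PP Psa rd by blast
  have comp: "P (V (P y)) = (\<lambda>n. (\<rho> / \<sigma>) * P y n)" if "y \<in> l2" for y
  proof -
    have VP: "V (P y) = lc (coef y) (\<lambda>i. V (x i)) k"
      unfolding P_def by (rule op_lc[OF b]) (use xl2 in auto)
    have "coef (V (P y)) j = coef y j * (\<rho> / \<sigma>)" if "j < k" for j
    proof -
      have "l2_inner (V (P y)) (x j) = (\<Sum>i<k. coef y i * l2_inner (V (x i)) (x j))"
        unfolding VP by (rule inner_lc_left) (use xl2 Vl2 in auto)
      also have "\<dots> = (\<Sum>i<k. coef y i * (if i = j then \<rho> else 0))"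
        by (rule sum.cong) (auto simp: gv)
      also have "\<dots> = coef y j * \<rho>" using kron_sum2[where c="coef y" and N=k and i=j and s=\<rho>] that by simp
      finally have h: "l2_inner (V (P y)) (x j) = coef y j * \<rho>" .
      show ?thesis using h unfolding coef_def by simp
    qed
    hence "P (V (P y)) = lc (\<lambda>j. coef y j * (\<rho> / \<sigma>)) x k"
      unfolding P_def by (intro lc_cong) simp
    thus ?thesis unfolding lc_scale P_def .
  qed
  show ?thesis unfolding Lambda_def using opr comp \<sigma>_def by blast
qed



lemma funpow_l2:
  assumes "isometry_op V" "u \<in> l2" shows "(V ^^ m) u \<in> l2"
proof -
  have "bounded_op (V ^^ m)" using isometry_funpow[OF assms(1), of m] unfolding isometry_op_def by simp
  thus ?thesis using bounded_opD(1) assms(2) by simp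
qed

lemma pow_inner:
  assumes iso: "isometry_op V" and "u \<in> l2" "w \<in> l2" "q \<le> p"
  shows "l2_inner ((V ^^ p) u) ((V ^^ q) w) = l2_inner ((V ^^ (p - q)) u) w"
proof -
  have "(V ^^ p) u = (V ^^ q) ((V ^^ (p - q)) u)"
    using assms(4) funpow_add[of q "p - q" V] by (simp add: fun_eq_iff)
  thus ?thesis
    using isometry_inner[OF isometry_funpow[OF iso, of q] funpow_l2[OF iso assms(2)] assms(3)] by simp
qed

lemma block_values:
  assumes iso: "isometry_op V" and e0l2: "e0 \<in> l2" and e0nz: "e0 \<noteq> (\<lambda>n. 0)"
    and orth: "\<And>x. x \<in> l2 \<Longrightarrow> l2_inner (V x) e0 = 0"
  shows "\<mu> * of_real ((\<Sum>n<M. ((cmod \<mu>)^2)^n) / (\<Sum>n<Suc M. ((cmod \<mu>)^2)^n)) \<in> Lambda k V"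
proof -
  have b: "bounded_op V" using iso unfolding isometry_op_def by auto
  have Vl2: "\<And>y. y \<in> l2 \<Longrightarrow> V y \<in> l2" using bounded_opD(1)[OF b] by auto
  define c where "c = (l2_norm e0)^2"
  have cpos: "c > 0" unfolding c_def
    using l2_norm_zero_iff[OF e0l2] e0nz l2_norm_nonneg[OF e0l2] by auto
  define e where "e = (\<lambda>n. (V ^^ n) e0)"
  have el2: "\<And>n. e n \<in> l2" unfolding e_def by (rule funpow_l2[OF iso e0l2])
  have ee_gt: "l2_inner (e n) (e m) = 0" if "m < n" for n m
  proof -
    have "l2_inner (e n) (e m) = l2_inner ((V ^^ (n - m)) e0) e0"
      unfolding e_def by (rule pow_inner[OF iso e0l2 e0l2]) (use that in simp)
    also define t where "t = n - m - 1"
    have "n - m = Suc t" using that unfolding t_def by simp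
    hence "(V ^^ (n - m)) e0 = V ((V ^^ t) e0)" by simp
    finally show ?thesis using orth[OF funpow_l2[OF iso e0l2]] by simp
  qed
  have ee: "l2_inner (e n) (e m) = (if n = m then of_real c else 0)" for n m
  proof (cases n m rule: linorder_cases)
    case less
    thus ?thesis using ee_gt[OF less] inner_commute[OF el2 el2, of m n] by simp
  next
    case equal
    thus ?thesis unfolding e_def c_def
      using isometry_inner[OF isometry_funpow[OF iso, of n] e0l2 e0l2] inner_self[OF e0l2] by simp
  next
    case greater
    thus ?thesis using ee_gt[OF greater] by simp
  qed
  define N where "N = Suc M"
  define a where "a = (\<lambda>n. (cnj \<mu>)^n)"
  define x0 where "x0 = lc a e N"
  have x0l2: "x0 \<in> l2" unfolding x0_def by (rule l2_lc) (use el2 in auto)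
  have Vmx0: "(V ^^ m) x0 = lc a (\<lambda>n. e (n + m)) N" for m
  proof -
    have bm: "bounded_op (V ^^ m)" using isometry_funpow[OF iso] unfolding isometry_op_def by auto
    have "(V ^^ m) x0 = lc a (\<lambda>i. (V ^^ m) (e i)) N"
      unfolding x0_def by (rule op_lc[OF bm]) (use el2 in auto)
    also have "(\<lambda>i. (V ^^ m) (e i)) = (\<lambda>n. e (n + m))"
    proof (rule ext)
      fix i
      have "V ^^ (i + m) = V ^^ m \<circ> V ^^ i" by (simp only: add.commute[of i m] funpow_add)
      thus "(V ^^ m) (e i) = e (i + m)" unfolding e_def by simp
    qed
    finally show ?thesis .
  qed
  define G where "G = (\<lambda>m. l2_inner ((V ^^ m) x0) x0)"
  have Gf: "G m = (\<Sum>n<N. a n * (if n + m < N then cnj (a (n + m)) * of_real c else 0))" for m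
  proof -
    have "G m = (\<Sum>n<N. a n * l2_inner (e (n + m)) x0)"
      unfolding G_def Vmx0 by (rule inner_lc_left) (use el2 x0l2 in auto)
    also have "\<dots> = (\<Sum>n<N. a n * (if n + m < N then cnj (a (n + m)) * of_real c else 0))"
    proof (rule sum.cong[OF refl])
      fix n
      have "l2_inner (e (n + m)) x0 = (\<Sum>j<N. cnj (a j) * l2_inner (e (n + m)) (e j))"
        unfolding x0_def by (rule inner_lc_right) (use el2 in auto)
      also have "\<dots> = (\<Sum>j<N. cnj (a j) * (if j = n + m then of_real c else 0))"
        by (rule sum.cong) (auto simp: ee)
      also have "\<dots> = (if n + m < N then cnj (a (n + m)) * of_real c else 0)"
        by (rule kron_sum2)
      finally show "a n * l2_inner (e (n + m)) x0 = a n * (if n + m < N then cnj (a (n + m)) * of_real c else 0)"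
        by simp
    qed
    finally show ?thesis .
  qed
  have Gbig: "G m = 0" if "N \<le> m" for m
    unfolding Gf using that by (intro sum.neutral) auto
  define SM where "SM = (\<Sum>n<M. ((cmod \<mu>)^2)^n)"
  define SN where "SN = (\<Sum>n<Suc M. ((cmod \<mu>)^2)^n)"
  have aa: "a n * cnj (a n) = of_real (((cmod \<mu>)^2)^n)" for n
  proof -
    have "a n * cnj (a n) = of_real ((cmod (a n))^2)" by (rule complex_norm_square[symmetric])
    also have "cmod (a n) = (cmod \<mu>)^n" unfolding a_def by (simp add: norm_power)
    also have "((cmod \<mu>)^n)^2 = ((cmod \<mu>)^2)^n"
    proof -
      have "((cmod \<mu>)^n)^2 = (cmod \<mu>)^(n * 2)" by (rule power_mult[symmetric])
      also have "\<dots> = (cmod \<mu>)^(2 * n)" by (simp only: mult.commute)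
      also have "\<dots> = ((cmod \<mu>)^2)^n" by (rule power_mult)
      finally show ?thesis .
    qed
    finally show ?thesis .
  qed
  have G0: "G 0 = of_real (c * SN)"
  proof -
    have "G 0 = (\<Sum>n<N. a n * cnj (a n) * of_real c)" unfolding Gf
      by (rule sum.cong) (auto simp: mult.assoc)
    also have "\<dots> = (\<Sum>n<N. of_real (c * ((cmod \<mu>)^2)^n))" unfolding aa by (simp add: mult.commute)
    also have "\<dots> = of_real (\<Sum>n<N. c * ((cmod \<mu>)^2)^n)" by (simp only: of_real_sum)
    also have "\<dots> = of_real (c * SN)" unfolding SN_def N_def by (simp only: sum_distrib_left)
    finally show ?thesis .
  qed
  have G1: "G 1 = \<mu> * of_real (c * SM)"
  proof -
    have "G 1 = (\<Sum>n<Suc M. a n * (if n + 1 < Suc M then cnj (a (n + 1)) * of_real c else 0))"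
      unfolding Gf N_def ..
    also have "\<dots> = (\<Sum>n<M. a n * (if n + 1 < Suc M then cnj (a (n + 1)) * of_real c else 0))"
      by (simp add: sum.lessThan_Suc)
    also have "\<dots> = (\<Sum>n<M. \<mu> * of_real (c * ((cmod \<mu>)^2)^n))"
    proof (rule sum.cong[OF refl])
      fix n assume "n \<in> {..<M}"
      hence "n + 1 < Suc M" by simp
      moreover have "cnj (a (n + 1)) = cnj (a n) * \<mu>" unfolding a_def by simp
      ultimately show "a n * (if n + 1 < Suc M then cnj (a (n + 1)) * of_real c else 0) = \<mu> * of_real (c * ((cmod \<mu>)^2)^n)"
        using aa[of n] by (simp add: algebra_simps)
    qed
    also have "\<dots> = \<mu> * (\<Sum>n<M. of_real (c * ((cmod \<mu>)^2)^n))" by (simp only: sum_distrib_left)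
    also have "(\<Sum>n<M. of_real (c * ((cmod \<mu>)^2)^n)) = (of_real (\<Sum>n<M. c * ((cmod \<mu>)^2)^n) :: complex)"
      by (simp only: of_real_sum)
    also have "\<dots> = of_real (c * SM)" unfolding SM_def by (simp only: sum_distrib_left)
    finally show ?thesis .
  qed
  have ip: "l2_inner ((V ^^ p) x0) ((V ^^ q) x0) = (if q \<le> p then G (p - q) else cnj (G (q - p)))" for p q
  proof (cases "q \<le> p")
    case True thus ?thesis unfolding G_def using pow_inner[OF iso x0l2 x0l2 True] by simp
  next
    case False
    hence "l2_inner ((V ^^ q) x0) ((V ^^ p) x0) = G (q - p)"
      unfolding G_def using pow_inner[OF iso x0l2 x0l2, of p q] by simp
    thus ?thesis using False inner_commute[OF funpow_l2[OF iso x0l2] funpow_l2[OF iso x0l2], of p q] by simp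
  qed
  define B where "B = Suc N"
  have N1: "N \<ge> 1" unfolding N_def by simp
  define x where "x = (\<lambda>i. (V ^^ (i * B)) x0)"
  have xl2: "\<And>i. x i \<in> l2" unfolding x_def by (rule funpow_l2[OF iso x0l2])
  have blk: "i * B + B \<le> j * B" if "i < j" for i j
  proof -
    have "Suc i * B \<le> j * B" using that by (intro mult_le_mono1) simp
    thus ?thesis by simp
  qed
  have SN0: "SN > 0" unfolding SN_def by (rule sum_pos2[of _ 0]) auto
  have gx: "l2_inner (x i) (x j) = (if i = j then of_real (c * SN) else 0)" for i j
  proof (cases i j rule: linorder_cases)
    case less
    hence "N \<le> j * B - i * B" using blk[OF less] N1 unfolding B_def by simp
    thus ?thesis unfolding x_def ip using less Gbig by auto
  next
    case equal thus ?thesis unfolding x_def ip using G0 by simp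
  next
    case greater
    hence "N \<le> i * B - j * B" using blk[OF greater] N1 unfolding B_def by simp
    thus ?thesis unfolding x_def ip using greater Gbig by auto
  qed
  have gv: "l2_inner (V (x i)) (x j) = (if i = j then \<mu> * of_real (c * SM) else 0)" for i j
  proof -
    have Vx: "V (x i) = (V ^^ Suc (i * B)) x0" unfolding x_def by simp
    show ?thesis
    proof (cases i j rule: linorder_cases)
      case less
      hence "N \<le> j * B - Suc (i * B)" using blk[OF less] N1 unfolding B_def by simp
      moreover have "\<not> j * B \<le> Suc (i * B)" using blk[OF less] N1 unfolding B_def by simp
      ultimately show ?thesis unfolding Vx unfolding x_def ip using less Gbig by auto
    next
      case equal thus ?thesis unfolding Vx unfolding x_def ip using G1 by simp
    next
      case greater
      hence "N \<le> Suc (i * B) - j * B" using blk[OF greater] N1 unfolding B_def by simp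
      moreover have "j * B \<le> Suc (i * B)" using blk[OF greater] by simp
      ultimately show ?thesis unfolding Vx unfolding x_def ip using greater Gbig by auto
    qed
  qed
  have "(\<mu> * of_real (c * SM)) / of_real (c * SN) \<in> Lambda k V"
    by (rule proj_lambda[OF b xl2 _ gx gv]) (use cpos SN0 in simp)
  moreover have "(\<mu> * of_real (c * SM)) / of_real (c * SN) = \<mu> * of_real (SM / SN)"
    using cpos SN0 by (simp add: field_simps)
  ultimately show ?thesis unfolding SM_def SN_def by simp
qed



lemma inner_scale_left:
  assumes "x \<in> l2" "z \<in> l2"
  shows "l2_inner (\<lambda>n. a * x n) z = a * l2_inner x z"
proof -
  have "l2_inner (\<lambda>n. a * x n) z = (\<Sum>n. a * (x n * cnj (z n)))"
    unfolding l2_inner_def by (simp add: mult.assoc)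
  also have "\<dots> = a * l2_inner x z"
    unfolding l2_inner_def by (rule suminf_mult[OF inner_summable[OF assms]])
  finally show ?thesis .
qed

lemma Lambda_bound:
  assumes iso: "isometry_op V" and k: "k \<ge> 1" and mu: "\<mu> \<in> Lambda k V"
  shows "cmod \<mu> \<le> 1"
proof -
  have b: "bounded_op V" and nV: "\<And>z. z \<in> l2 \<Longrightarrow> l2_norm (V z) = l2_norm z"
    using iso unfolding isometry_op_def by auto
  have Vl2: "\<And>y. y \<in> l2 \<Longrightarrow> V y \<in> l2" using bounded_opD(1)[OF b] by auto
  obtain P where opr: "orth_proj_rank k P" and comp: "\<And>x. x \<in> l2 \<Longrightarrow> P (V (P x)) = (\<lambda>n. \<mu> * P x n)"
    using mu unfolding Lambda_def by blast
  have bP: "bounded_op P" and idem: "\<And>x. x \<in> l2 \<Longrightarrow> P (P x) = P x"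
    and sa: "\<And>x y. x \<in> l2 \<Longrightarrow> y \<in> l2 \<Longrightarrow> l2_inner (P x) y = l2_inner x (P y)"
    and rd: "range_dim P k"
    using opr unfolding orth_proj_rank_def by auto
  obtain e where el2: "\<And>i. i < k \<Longrightarrow> e i \<in> l2"
    and ind: "\<And>c. (\<lambda>n. \<Sum>i<k. c i * e i n) = (\<lambda>n. 0) \<Longrightarrow> (\<forall>i<k. c i = 0)"
    and rng: "P ` l2 = {(\<lambda>n. \<Sum>i<k. c i * e i n) | c. True}"
    using rd unfolding range_dim_def by blast
  define c1 where "c1 = (\<lambda>i::nat. if i = 0 then (1::complex) else 0)"
  have k0: "0 < k" using k by simp
  have lc1: "(\<lambda>n. \<Sum>i<k. c1 i * e i n) = e 0"
  proof (rule ext)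
    fix n
    have "(\<Sum>i<k. c1 i * e i n) = (\<Sum>i<k. if i = 0 then e i n else 0)"
      unfolding c1_def by (rule sum.cong) auto
    also have "\<dots> = e 0 n" using k0 by (subst sum.delta) auto
    finally show "(\<Sum>i<k. c1 i * e i n) = e 0 n" .
  qed
  define x where "x = e 0"
  have xl2: "x \<in> l2" unfolding x_def using el2 k0 by simp
  have xnz: "x \<noteq> (\<lambda>n. 0)"
  proof
    assume "x = (\<lambda>n. 0)"
    hence "\<forall>i<k. c1 i = 0" using ind[of c1] lc1 unfolding x_def by simp
    thus False using k0 unfolding c1_def by auto
  qed
  have "x \<in> P ` l2" unfolding rng x_def
    by (rule CollectI, rule exI[of _ c1]) (simp add: lc1)
  then obtain u where u: "u \<in> l2" "x = P u" by blast
  have Px: "P x = x" using idem[OF u(1)] u(2) by simp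
  have h: "P (V x) = (\<lambda>n. \<mu> * x n)" using comp[OF xl2] Px by simp
  have "l2_inner (P (V x)) x = l2_inner (V x) x"
    using sa[OF Vl2[OF xl2] xl2] Px by simp
  hence "\<mu> * l2_inner x x = l2_inner (V x) x"
    using h inner_scale_left[OF xl2 xl2, of \<mu>] by simp
  hence eq: "\<mu> * of_real ((l2_norm x)^2) = l2_inner (V x) x" unfolding inner_self[OF xl2] .
  have "cmod \<mu> * (l2_norm x)^2 = cmod (l2_inner (V x) x)"
    unfolding eq[symmetric] norm_mult norm_of_real by simp
  hence "cmod \<mu> * (l2_norm x)^2 \<le> l2_norm (V x) * l2_norm x"
    using cauchy_schwarz[OF Vl2[OF xl2] xl2] by simp
  hence le: "cmod \<mu> * (l2_norm x)^2 \<le> 1 * (l2_norm x)^2"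
    using nV[OF xl2] by (simp add: power2_eq_square)
  have "l2_norm x \<noteq> 0" using l2_norm_zero_iff[OF xl2] xnz by simp
  hence "(l2_norm x)^2 > 0" by simp
  thus ?thesis using le by (simp only: mult_le_cancel_right)
qed

theorem corollary2p7:
  fixes V :: "(nat \<Rightarrow> complex) \<Rightarrow> (nat \<Rightarrow> complex)" and k :: nat
  assumes "isometry_op V" and "\<not> unitary_op V" and "k \<ge> 1"
  shows "closure (Lambda k V) = cball 0 1"
proof
  show "closure (Lambda k V) \<subseteq> cball 0 1"
    by (rule closure_minimal) (use Lambda_bound[OF assms(1,3)] in auto)
next
  obtain e0 where e0l2: "e0 \<in> l2" and e0nz: "e0 \<noteq> (\<lambda>n. 0)"
    and orth: "\<And>x. x \<in> l2 \<Longrightarrow> l2_inner (V x) e0 = 0"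
    using wandering[OF assms(1,2)] by blast
  have ball: "\<mu> \<in> closure (Lambda k V)" if "cmod \<mu> < 1" for \<mu>
  proof -
    define r where "r = (cmod \<mu>)^2"
    have r0: "0 \<le> r" "r < 1" unfolding r_def using that
      by (simp_all add: power_less_one_iff abs_square_less_1)
    have "(\<lambda>n. r^n) sums (1 / (1 - r))" by (rule geometric_sums) (use r0 in simp)
    hence l1: "(\<lambda>M. \<Sum>n<M. r^n) \<longlonglongrightarrow> 1 / (1 - r)" by (simp add: sums_def)
    hence l2: "(\<lambda>M. \<Sum>n<Suc M. r^n) \<longlonglongrightarrow> 1 / (1 - r)" by (rule LIMSEQ_Suc)
    have "(\<lambda>M. (\<Sum>n<M. r^n) / (\<Sum>n<Suc M. r^n)) \<longlonglongrightarrow> (1 / (1 - r)) / (1 / (1 - r))"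
      by (rule tendsto_divide[OF l1 l2]) (use r0 in simp)
    hence "(\<lambda>M. (\<Sum>n<M. r^n) / (\<Sum>n<Suc M. r^n)) \<longlonglongrightarrow> 1" using r0 by simp
    hence "(\<lambda>M. \<mu> * of_real ((\<Sum>n<M. r^n) / (\<Sum>n<Suc M. r^n))) \<longlonglongrightarrow> \<mu> * of_real 1"
      by (intro tendsto_mult tendsto_const tendsto_of_real)
    hence lim: "(\<lambda>M. \<mu> * of_real ((\<Sum>n<M. r^n) / (\<Sum>n<Suc M. r^n))) \<longlonglongrightarrow> \<mu>" by simp
    have mem: "\<And>M. \<mu> * of_real ((\<Sum>n<M. r^n) / (\<Sum>n<Suc M. r^n)) \<in> Lambda k V"
      unfolding r_def by (rule block_values[OF assms(1) e0l2 e0nz orth])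
    show ?thesis unfolding closure_sequential
      by (rule exI[of _ "\<lambda>M. \<mu> * of_real ((\<Sum>n<M. r^n) / (\<Sum>n<Suc M. r^n))"]) (use mem lim in simp)
  qed
  have "ball 0 1 \<subseteq> closure (Lambda k V)" using ball by auto
  hence "closure (ball 0 1) \<subseteq> closure (closure (Lambda k V))" by (rule closure_mono)
  thus "cball 0 1 \<subseteq> closure (Lambda k V)" by simp
qed


end
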